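(* Let $k\ge 1$, $\tau=1000k$, $\rho=1-\frac{1}{10\tau}$, and let $g:\{0,1\}^n\to\{0,1\}$ be a $k$-term DNF. If $y^1\in\{0,1\}^n$ satisfies $g_{\le\tau}(y^1)=1$, then $T_\rho g(y^1)\ge 0.9$.
   Context: $g_{\le L}$ is the sub-DNF of $g$ consisting of terms with at most $L$ literals. For $x\in\{0,1\}^n$, $\mathbf{y}\sim N_\rho(x)$ means each bit independently has $\mathbf{y}_i=x_i$ with probability $\rho$ and $\mathbf{y}_i=1-x_i$ with probability $1-\rho$. The noise operator is $T_\rho g(x)=\mathbb{E}_{\mathbf{y}\sim N_\rho(x)}[g(\mathbf{y})]$. *)

theory Defs
  imports Complex_Main "HOL-Library.FuncSet"
begin

text \<open>A literal is a pair (i, b) meaning "x_i = b"; a term is a finite set of literals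
  (its length is the number of literals); a DNF is a finite set of terms.\<close>

type_synonym lit = "nat \<times> bool"

definition is_dnf :: "nat \<Rightarrow> lit set set \<Rightarrow> bool" where
  "is_dnf n F \<longleftrightarrow> finite F \<and> (\<forall>t\<in>F. finite t \<and> (\<forall>(i, b)\<in>t. i < n))"

definition term_sat :: "lit set \<Rightarrow> (nat \<Rightarrow> bool) \<Rightarrow> bool" where
  "term_sat t x \<longleftrightarrow> (\<forall>(i, b)\<in>t. x i = b)"

definition dnf_eval :: "lit set set \<Rightarrow> (nat \<Rightarrow> bool) \<Rightarrow> real" where
  "dnf_eval F x = (if \<exists>t\<in>F. term_sat t x then 1 else 0)"

definition dnf_le :: "nat \<Rightarrow> lit set set \<Rightarrow> lit set set" where
  "dnf_le L F = {t \<in> F. card t \<le> L}"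

definition cube :: "nat \<Rightarrow> (nat \<Rightarrow> bool) set" where
  "cube n = PiE {..<n} (\<lambda>_. UNIV)"

definition noise_op :: "nat \<Rightarrow> real \<Rightarrow> ((nat \<Rightarrow> bool) \<Rightarrow> real) \<Rightarrow> (nat \<Rightarrow> bool) \<Rightarrow> real" where
  "noise_op n \<rho> g x =
     (\<Sum>y\<in>cube n. (\<Prod>i<n. if y i = x i then \<rho> else 1 - \<rho>) * g y)"

end

theory Submission
  imports Defs
begin

theorem claim6p4:
  fixes n k :: nat and F :: "lit set set" and \<tau> \<rho> :: real and y1 :: "nat \<Rightarrow> bool"
  assumes "k \<ge> 1"
    and "\<tau> = 1000 * real k"
    and "\<rho> = 1 - 1 / (10 * \<tau>)"
    and "is_dnf n F" and "card F \<le> k"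
    and "y1 \<in> cube n"
    and "dnf_eval (dnf_le (1000 * k) F) y1 = 1"
  shows "noise_op n \<rho> (dnf_eval F) y1 \<ge> 0.9"
proof -
  obtain t where tF: "t \<in> F" and tc: "card t \<le> 1000 * k" and ts: "term_sat t y1"
    using assms(7) unfolding dnf_eval_def dnf_le_def by (auto split: if_splits)
  have ft: "finite t" and tn: "\<forall>(i, b)\<in>t. i < n" using assms(4) tF unfolding is_dnf_def by auto
  define S where "S = fst ` t"
  have cS: "card S \<le> 1000 * k" unfolding S_def using card_image_le[OF ft, of fst] tc by linarith
  have Sn: "S \<subseteq> {..<n}" using tn unfolding S_def by auto
  have kpos: "real k \<ge> 1" using assms(1) by simp
  have inv: "1 / (10 * \<tau>) \<le> 1" "0 \<le> 1 / (10 * \<tau>)" using assms(2) kpos by auto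
  have r0: "0 \<le> \<rho>" and r1: "\<rho> \<le> 1" using assms(3) inv by auto
  define w where "w i b = (if b = y1 i then \<rho> else 1 - \<rho>)" for i :: nat and b :: bool
  define h where "h i b = (if i \<in> S \<and> b \<noteq> y1 i then 0 else w i b)" for i b
  have hsum: "(\<Sum>b\<in>UNIV. h i b) = (if i \<in> S then \<rho> else 1)" for i
    unfolding h_def w_def UNIV_bool by (cases "y1 i") auto
  have "(\<Sum>y\<in>cube n. \<Prod>i<n. h i (y i)) = (\<Prod>i<n. \<Sum>b\<in>UNIV. h i b)"
    unfolding cube_def by (rule prod_sum_PiE[symmetric]) auto
  also have "\<dots> = (\<Prod>i<n. if i \<in> S then \<rho> else 1)" using hsum by simp
  also have "\<dots> = \<rho> ^ card S"
  proof -
    have "(\<Prod>i<n. if i \<in> S then \<rho> else 1) = (\<Prod>i\<in>{..<n} \<inter> S. \<rho>)"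
      by (simp add: prod.If_cases Int_def lessThan_def)
    also have "{..<n} \<inter> S = S" using Sn by auto
    finally show ?thesis by simp
  qed
  finally have eq: "(\<Sum>y\<in>cube n. \<Prod>i<n. h i (y i)) = \<rho> ^ card S" .
  have pw: "(\<Prod>i<n. h i (y i)) \<le> (\<Prod>i<n. if y i = y1 i then \<rho> else 1 - \<rho>) * dnf_eval F y"
    if "y \<in> cube n" for y
  proof (cases "\<forall>i\<in>S. y i = y1 i")
    case True
    have "term_sat t y" using ts True unfolding term_sat_def S_def by force
    then have "dnf_eval F y = 1" using tF unfolding dnf_eval_def by auto
    moreover have "(\<Prod>i<n. h i (y i)) = (\<Prod>i<n. if y i = y1 i then \<rho> else 1 - \<rho>)"
      using True unfolding h_def w_def by (intro prod.cong) auto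
    ultimately show ?thesis by simp
  next
    case False
    then obtain j where "j \<in> S" "y j \<noteq> y1 j" by auto
    then have "(\<Prod>i<n. h i (y i)) = 0" using Sn unfolding h_def
      by (intro prod_zero) auto
    moreover have "0 \<le> (\<Prod>i<n. if y i = y1 i then \<rho> else 1 - \<rho>) * dnf_eval F y"
      using r0 r1 by (intro mult_nonneg_nonneg prod_nonneg) (auto simp: dnf_eval_def)
    ultimately show ?thesis by linarith
  qed
  have "\<rho> ^ card S \<le> noise_op n \<rho> (dnf_eval F) y1"
    unfolding noise_op_def eq[symmetric] by (rule sum_mono) (use pw in auto)
  moreover have "0.9 \<le> \<rho> ^ card S"
  proof -
    have b: "1 + real (card S) * (\<rho> - 1) \<le> (1 + (\<rho> - 1)) ^ card S"
      by (rule Bernoulli_inequality) (use r0 in auto)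
    have "real (card S) \<le> 1000 * real k" using cS by (metis of_nat_le_iff of_nat_mult of_nat_numeral)
    then have "real (card S) * (1 - \<rho>) \<le> 1000 * real k * (1 - \<rho>)"
      using r1 by (intro mult_right_mono) auto
    also have "\<dots> = 0.1" using assms(2,3) kpos by (simp add: field_simps)
    finally show ?thesis using b by (simp add: algebra_simps)
  qed
  ultimately show ?thesis by linarith
qed

end
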